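(* Let $\Omega$ be an infinite set and $0\leq k\leq i\leq j$ integers with $k<j$. If $k>0$, then in each of the graphs $\Gamma^\Omega_{i,j;k}$ and $\Gamma^\Omega_{i,j;\geq k}$ each bipart contains a finite set of vertices that have no common neighbour. In the graph $\Gamma^\Omega_{i,j;0}$, every finite set of vertices contained in one bipart has a common neighbour.
   Context: $\Gamma^\Omega_{i,j;k}$ is the bipartite graph with biparts the $i$-subsets and the $j$-subsets of $\Omega$ (two copies if $i=j$), an $i$-subset adjacent to a $j$-subset iff their intersection has exactly $k$ elements; $\Gamma^\Omega_{i,j;\geq k}$ is defined likewise with adjacency iff the intersection has at least $k$ elements. *)

theory Defs
  imports Main
begin

text \<open>When i = j the two biparts are two separate copies, which this representation
  models automatically since the sides are kept apart.\<close>
record 'v bigraph =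
  lpart :: "'v set"
  rpart :: "'v set"
  badj  :: "'v \<Rightarrow> 'v \<Rightarrow> bool"

definition subsets_card :: "'a set \<Rightarrow> nat \<Rightarrow> 'a set set" where
  "subsets_card \<Omega> n = {A. A \<subseteq> \<Omega> \<and> finite A \<and> card A = n}"

definition Gamma_eq :: "'a set \<Rightarrow> nat \<Rightarrow> nat \<Rightarrow> nat \<Rightarrow> 'a set bigraph" where
  "Gamma_eq \<Omega> i j k = \<lparr>lpart = subsets_card \<Omega> i, rpart = subsets_card \<Omega> j,
      badj = (\<lambda>A B. card (A \<inter> B) = k)\<rparr>"

definition Gamma_ge :: "'a set \<Rightarrow> nat \<Rightarrow> nat \<Rightarrow> nat \<Rightarrow> 'a set bigraph" where
  "Gamma_ge \<Omega> i j k = \<lparr>lpart = subsets_card \<Omega> i, rpart = subsets_card \<Omega> j,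
      badj = (\<lambda>A B. card (A \<inter> B) \<ge> k)\<rparr>"

definition common_nbr_L :: "('v, 'z) bigraph_scheme \<Rightarrow> 'v set \<Rightarrow> bool" where
  "common_nbr_L G S = (\<exists>B\<in>rpart G. \<forall>A\<in>S. badj G A B)"

definition common_nbr_R :: "('v, 'z) bigraph_scheme \<Rightarrow> 'v set \<Rightarrow> bool" where
  "common_nbr_R G T = (\<exists>A\<in>lpart G. \<forall>B\<in>T. badj G A B)"

end

theory Submission
  imports Defs
begin

lemma disj_family:
  fixes \<Omega> :: "'a set"
  assumes "infinite \<Omega>"
  shows "\<exists>f :: nat \<Rightarrow> 'a set. (\<forall>l. f l \<subseteq> \<Omega> \<and> finite (f l) \<and> card (f l) = s) \<and>
             (\<forall>l m. l \<noteq> m \<longrightarrow> f l \<inter> f m = {})"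
proof -
  obtain g :: "nat \<Rightarrow> 'a" where g: "inj g" "range g \<subseteq> \<Omega>"
    using infinite_countable_subset[OF assms] by blast
  define f where "f l = g ` {l*s..<(l+1)*s}" for l
  have F1: "f l \<subseteq> \<Omega> \<and> finite (f l) \<and> card (f l) = s" for l
    using g unfolding f_def by (auto simp: card_image inj_on_subset[OF g(1)])
  have F2: "f l \<inter> f m = {}" if "l \<noteq> m" for l m
  proof -
    have "{l*s..<(l+1)*s} \<inter> {m*s..<(m+1)*s} = {}"
    proof (cases "l < m")
      case True
      then have "(l+1)*s \<le> m*s" using mult_le_mono1[of "l+1" m s] by simp
      then show ?thesis by auto
    next
      case False
      then have "(m+1)*s \<le> l*s" using that mult_le_mono1[of "m+1" l s] by simp
      then show ?thesis by auto
    qed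
    then show ?thesis unfolding f_def using g(1)
      by (simp add: image_Int[symmetric])
  qed
  show ?thesis
    by (rule exI[of _ f]) (use F1 F2 in blast)
qed

lemma count_lemma:
  assumes "finite B" "\<forall>l<n. card (B \<inter> f l) \<ge> 1"
    "\<forall>l m. l \<noteq> m \<longrightarrow> f l \<inter> f m = {}"
  shows "card B \<ge> n"
proof -
  have "card (\<Union>l\<in>{..<n}. B \<inter> f l) = (\<Sum>l\<in>{..<n}. card (B \<inter> f l))"
    by (rule card_UN_disjoint) (use assms in auto)
  also have "\<dots> \<ge> (\<Sum>l\<in>{..<n}. 1)" by (rule sum_mono) (use assms in auto)
  finally have "card (\<Union>l\<in>{..<n}. B \<inter> f l) \<ge> n" by simp
  moreover have "card (\<Union>l\<in>{..<n}. B \<inter> f l) \<le> card B"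
    by (rule card_mono) (use assms in auto)
  ultimately show ?thesis by simp
qed

lemma no_common:
  fixes \<Omega> :: "'a set"
  assumes "infinite \<Omega>" "0 < k" "k \<le> s" "t < n"
  shows "\<exists>S \<subseteq> subsets_card \<Omega> s. finite S \<and>
     \<not> (\<exists>B \<in> subsets_card \<Omega> t. \<forall>A\<in>S. card (A \<inter> B) \<ge> k)"
proof -
  obtain f :: "nat \<Rightarrow> 'a set" where f: "\<forall>l. f l \<subseteq> \<Omega> \<and> finite (f l) \<and> card (f l) = s"
    "\<forall>l m. l \<noteq> m \<longrightarrow> f l \<inter> f m = {}"
    using disj_family[OF assms(1), of s] by metis
  have "f l \<in> subsets_card \<Omega> s" for l using f(1) unfolding subsets_card_def by blast
  then have X1: "f ` {..<n} \<subseteq> subsets_card \<Omega> s" by blast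
  have X2: "\<not> (\<exists>B \<in> subsets_card \<Omega> t. \<forall>A\<in>f ` {..<n}. card (A \<inter> B) \<ge> k)"
  proof
    assume "\<exists>B \<in> subsets_card \<Omega> t. \<forall>A\<in>f ` {..<n}. card (A \<inter> B) \<ge> k"
    then obtain B where B0: "B \<in> subsets_card \<Omega> t" and B3: "\<forall>A\<in>f ` {..<n}. card (A \<inter> B) \<ge> k"
      by blast
    from B0 have B: "finite B" "card B = t" unfolding subsets_card_def by simp_all
    have "\<forall>l<n. card (B \<inter> f l) \<ge> 1"
    proof (intro allI impI)
      fix l assume "l < n"
      then have "card (f l \<inter> B) \<ge> k" using B3 by simp
      then show "card (B \<inter> f l) \<ge> 1" using assms(2) by (simp add: Int_commute)
    qed
    then have "card B \<ge> n" using count_lemma[OF B(1) _ f(2)] by blast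
    then show False using B(2) assms(4) by simp
  qed
  show ?thesis
    by (rule exI[of _ "f ` {..<n}"]) (use X1 X2 in simp)
qed

lemma has_common:
  fixes \<Omega> :: "'a set"
  assumes "infinite \<Omega>" "finite S" "S \<subseteq> subsets_card \<Omega> s"
  shows "\<exists>B \<in> subsets_card \<Omega> t. \<forall>A\<in>S. card (A \<inter> B) = 0"
proof -
  have "finite (\<Union>S)" using assms by (auto simp: subsets_card_def)
  then have "infinite (\<Omega> - \<Union>S)" using assms(1) by auto
  then obtain B where B: "B \<subseteq> \<Omega> - \<Union>S" "finite B" "card B = t"
    using infinite_arbitrarily_large[of "\<Omega> - \<Union>S" t] by metis
  then have "B \<in> subsets_card \<Omega> t" by (auto simp: subsets_card_def)
  moreover have "\<forall>A\<in>S. A \<inter> B = {}" using B(1) by auto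
  ultimately show ?thesis by (metis card.empty)
qed

theorem lemma4p4:
  fixes \<Omega> :: "'a set" and i j k :: nat
  assumes "infinite \<Omega>" and "k \<le> i" and "i \<le> j" and "k < j"
  shows "(k > 0 \<longrightarrow>
            (\<forall>G \<in> {Gamma_eq \<Omega> i j k, Gamma_ge \<Omega> i j k}.
               (\<exists>S \<subseteq> lpart G. finite S \<and> \<not> common_nbr_L G S) \<and>
               (\<exists>T \<subseteq> rpart G. finite T \<and> \<not> common_nbr_R G T)))
       \<and> (\<forall>S \<subseteq> lpart (Gamma_eq \<Omega> i j 0). finite S \<longrightarrow> common_nbr_L (Gamma_eq \<Omega> i j 0) S)
       \<and> (\<forall>T \<subseteq> rpart (Gamma_eq \<Omega> i j 0). finite T \<longrightarrow> common_nbr_R (Gamma_eq \<Omega> i j 0) T)"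
proof (intro conjI impI allI)
  assume k: "k > 0"
  obtain S where S: "S \<subseteq> subsets_card \<Omega> i" "finite S"
     "\<not> (\<exists>B \<in> subsets_card \<Omega> j. \<forall>A\<in>S. card (A \<inter> B) \<ge> k)"
    using no_common[OF assms(1) k assms(2), of j "Suc j"] by auto
  obtain T where T: "T \<subseteq> subsets_card \<Omega> j" "finite T"
     "\<not> (\<exists>A \<in> subsets_card \<Omega> i. \<forall>B\<in>T. card (B \<inter> A) \<ge> k)"
    using no_common[OF assms(1) k, of j i "Suc j"] assms by auto
  have S4: "\<forall>B\<in>subsets_card \<Omega> j. \<exists>A\<in>S. card (A \<inter> B) < k"
    using S(3) by (auto simp: not_le)
  have T4: "\<forall>A\<in>subsets_card \<Omega> i. \<exists>B\<in>T. card (A \<inter> B) < k"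
    using T(3) by (auto simp: not_le Int_commute)
  have S5: "\<not>(\<exists>B\<in>subsets_card \<Omega> j. \<forall>A\<in>S. card (A \<inter> B) = k)"
    using S4 by fastforce
  have S6: "\<not>(\<exists>B\<in>subsets_card \<Omega> j. \<forall>A\<in>S. k \<le> card (A \<inter> B))"
    using S4 by fastforce
  have T5: "\<not>(\<exists>A\<in>subsets_card \<Omega> i. \<forall>B\<in>T. card (A \<inter> B) = k)"
    using T4 by fastforce
  have T6: "\<not>(\<exists>A\<in>subsets_card \<Omega> i. \<forall>B\<in>T. k \<le> card (A \<inter> B))"
    using T4 by fastforce
  have E1: "\<not> common_nbr_L (Gamma_eq \<Omega> i j k) S"
    unfolding common_nbr_L_def Gamma_eq_def using S5 by simp
  have E2: "\<not> common_nbr_R (Gamma_eq \<Omega> i j k) T"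
    unfolding common_nbr_R_def Gamma_eq_def using T5 by simp
  have E3: "\<not> common_nbr_L (Gamma_ge \<Omega> i j k) S"
    unfolding common_nbr_L_def Gamma_ge_def using S6 by simp
  have E4: "\<not> common_nbr_R (Gamma_ge \<Omega> i j k) T"
    unfolding common_nbr_R_def Gamma_ge_def using T6 by simp
  have L: "\<not> common_nbr_L G S" "\<not> common_nbr_R G T"
    if "G \<in> {Gamma_eq \<Omega> i j k, Gamma_ge \<Omega> i j k}" for G
    using that E1 E2 E3 E4 by auto
  show "\<forall>G \<in> {Gamma_eq \<Omega> i j k, Gamma_ge \<Omega> i j k}.
               (\<exists>S \<subseteq> lpart G. finite S \<and> \<not> common_nbr_L G S) \<and>
               (\<exists>T \<subseteq> rpart G. finite T \<and> \<not> common_nbr_R G T)"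
  proof (intro ballI conjI)
    fix G assume G: "G \<in> {Gamma_eq \<Omega> i j k, Gamma_ge \<Omega> i j k}"
    have "lpart G = subsets_card \<Omega> i" "rpart G = subsets_card \<Omega> j"
      using G by (auto simp: Gamma_eq_def Gamma_ge_def)
    then show "\<exists>S \<subseteq> lpart G. finite S \<and> \<not> common_nbr_L G S"
      "\<exists>T \<subseteq> rpart G. finite T \<and> \<not> common_nbr_R G T"
      using L[OF G] S(1,2) T(1,2) by auto
  qed
next
  fix S assume "S \<subseteq> lpart (Gamma_eq \<Omega> i j 0)" "finite S"
  then show "common_nbr_L (Gamma_eq \<Omega> i j 0) S"
    using has_common[OF assms(1), of S i j]
    by (auto simp: Gamma_eq_def common_nbr_L_def)
next
  fix T assume "T \<subseteq> rpart (Gamma_eq \<Omega> i j 0)" "finite T"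
  then show "common_nbr_R (Gamma_eq \<Omega> i j 0) T"
    using has_common[OF assms(1), of T j i]
    by (auto simp: Gamma_eq_def common_nbr_R_def Int_commute)
qed

end
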